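(* Let $M>0$, let $f:[0,1]\to\mathbb{R}$ satisfy $|f(x)-f(y)|\le M|x-y|$ for all $x,y\in[0,1]$, and let $g(x)=f(x)\bmod 1\in[0,1)$. Let $n\ge2$ be an integer and $x_i=\frac{i-1}{n-1}$ for $i=1,\dots,n$. Let $\delta\in[0,1/2]$ and let $\hat g:[0,1]\to[0,1)$ satisfy $d_w(\hat g(x_i),g(x_i))\le\delta$ for all $i$. Define $\tilde f(x_1)=\hat g(x_1)$ and, for $i=2,\dots,n$, $$\tilde f(x_i)=\tilde f(x_{i-1})+\begin{cases}\hat g(x_i)-\hat g(x_{i-1}) & \text{if } |\hat g(x_i)-\hat g(x_{i-1})|<1/2,\\ 1+\hat g(x_i)-\hat g(x_{i-1}) & \text{if } \hat g(x_i)-\hat g(x_{i-1})<-1/2,\\ -1+\hat g(x_i)-\hat g(x_{i-1}) & \text{if } \hat g(x_i)-\hat g(x_{i-1})>1/2.\end{cases}$$ If $2\delta+\frac{M}{n-1}<\frac12$, then there exists $q^\star\in\mathbb{Z}$ such that $|\tilde f(x_i)+q^\star-f(x_i)|\le\delta$ for all $i=1,\dots,n$.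
   Context: For $a\in\mathbb{R}$, $a\bmod 1\in[0,1)$ denotes $a-\lfloor a\rfloor$. The wrap-around distance on $[0,1)$ is $d_w(a,b)=\min(|a-b|,1-|a-b|)$. *)

theory Defs
  imports "HOL-Analysis.Analysis"
begin

definition mod1 :: "real \<Rightarrow> real" where
  "mod1 a = a - of_int \<lfloor>a\<rfloor>"

definition dw :: "real \<Rightarrow> real \<Rightarrow> real" where
  "dw a b = min \<bar>a - b\<bar> (1 - \<bar>a - b\<bar>)"

definition gridpt :: "nat \<Rightarrow> nat \<Rightarrow> real" where
  "gridpt n i = (real i - 1) / (real n - 1)"

definition unwrap_incr :: "real \<Rightarrow> real \<Rightarrow> real" where
  "unwrap_incr a b =
     (if \<bar>b - a\<bar> < 1/2 then b - a
      else if b - a < - (1/2) then 1 + b - a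
      else if b - a > 1/2 then -1 + b - a
      else 0)"

text \<open>ftilde gh n i = \<tilde>f(x_i), for 1-based i (value at i = 0 is irrelevant, set equal to i = 1)\<close>
fun ftilde :: "(real \<Rightarrow> real) \<Rightarrow> nat \<Rightarrow> nat \<Rightarrow> real" where
  "ftilde gh n 0 = gh (gridpt n 1)"
| "ftilde gh n (Suc 0) = gh (gridpt n 1)"
| "ftilde gh n (Suc (Suc k)) =
     ftilde gh n (Suc k) + unwrap_incr (gh (gridpt n (Suc k))) (gh (gridpt n (Suc (Suc k))))"

end

theory Submission
  imports Defs
begin

lemma dw_int:
  assumes "dw a (mod1 y) \<le> \<delta>" "0 \<le> a" "a < 1"
  shows "\<exists>k::int. \<bar>a + of_int k - y\<bar> \<le> \<delta>"
proof -
  let ?m = "mod1 y"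
  have m: "?m = y - of_int \<lfloor>y\<rfloor>" by (simp add: mod1_def)
  have m01: "0 \<le> ?m" "?m < 1" using m by linarith+
  consider "\<bar>a - ?m\<bar> \<le> \<delta>" | "1 - \<bar>a - ?m\<bar> \<le> \<delta>" using assms unfolding dw_def by linarith
  then show ?thesis
  proof cases
    case 1
    then have "\<bar>a + of_int \<lfloor>y\<rfloor> - y\<bar> \<le> \<delta>" using m by simp
    then show ?thesis by blast
  next
    case 2
    show ?thesis
    proof (cases "a - ?m \<ge> 0")
      case True
      have h: "a + of_int (\<lfloor>y\<rfloor> - 1) - y = a - ?m - 1" using m by simp
      have "\<bar>a - ?m - 1\<bar> \<le> \<delta>" using m01 True 2 assms(2,3) by (simp add: abs_le_iff)
      then have "\<bar>a + of_int (\<lfloor>y\<rfloor> - 1) - y\<bar> \<le> \<delta>" using h by simp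
      then show ?thesis by blast
    next
      case False
      have h: "a + of_int (\<lfloor>y\<rfloor> + 1) - y = a - ?m + 1" using m by simp
      have "\<bar>a - ?m + 1\<bar> \<le> \<delta>" using m01 False 2 assms(2,3) by (simp add: abs_le_iff)
      then have "\<bar>a + of_int (\<lfloor>y\<rfloor> + 1) - y\<bar> \<le> \<delta>" using h by simp
      then show ?thesis by blast
    qed
  qed
qed

lemma unwrap_eq:
  assumes "b - a = d + of_int z" "\<bar>b - a\<bar> < 1" "\<bar>d\<bar> < 1/2"
  shows "unwrap_incr a b = d"
proof -
  have "of_int \<bar>z\<bar> < (3/2::real)" using assms by linarith
  then have "\<bar>z\<bar> < 2" by linarith
  then have "z = 0 \<or> z = 1 \<or> z = -1" by linarith
  then show ?thesis using assms unfolding unwrap_incr_def by auto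
qed

theorem mainTheorem2:
  fixes f gh :: "real \<Rightarrow> real" and M \<delta> :: real and n :: nat
  assumes M_pos: "M > 0"
    and f_lip: "\<forall>x\<in>{0..1}. \<forall>y\<in>{0..1}. \<bar>f x - f y\<bar> \<le> M * \<bar>x - y\<bar>"
    and n_ge: "n \<ge> 2"
    and \<delta>_range: "0 \<le> \<delta>" "\<delta> \<le> 1/2"
    and gh_range: "\<forall>x\<in>{0..1}. 0 \<le> gh x \<and> gh x < 1"
    and gh_close: "\<forall>i\<in>{1..n}. dw (gh (gridpt n i)) (mod1 (f (gridpt n i))) \<le> \<delta>"
    and small: "2 * \<delta> + M / (real n - 1) < 1/2"
  shows "\<exists>q::int. \<forall>i\<in>{1..n}. \<bar>ftilde gh n i + of_int q - f (gridpt n i)\<bar> \<le> \<delta>"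
proof -
  have n1: "real n - 1 > 0" using n_ge by simp
  have grid01: "gridpt n i \<in> {0..1}" if "i \<in> {1..n}" for i
    using that n1 by (auto simp: gridpt_def divide_simps)
  have "\<forall>i\<in>{1..n}. \<exists>k::int. \<bar>gh (gridpt n i) + of_int k - f (gridpt n i)\<bar> \<le> \<delta>"
    using gh_close dw_int gh_range grid01 by blast
  then obtain k :: "nat \<Rightarrow> int" where k: "\<And>i. i \<in> {1..n} \<Longrightarrow> \<bar>gh (gridpt n i) + of_int (k i) - f (gridpt n i)\<bar> \<le> \<delta>"
    by metis
  define e where "e i = gh (gridpt n i) + of_int (k i) - f (gridpt n i)" for i
  have e: "\<And>i. i \<in> {1..n} \<Longrightarrow> \<bar>e i\<bar> \<le> \<delta>" using k e_def by simp
  have gstep: "\<bar>gridpt n (Suc i) - gridpt n i\<bar> = 1 / (real n - 1)" for i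
    using n1 by (simp add: gridpt_def diff_divide_distrib[symmetric])
  have main: "ftilde gh n i = gh (gridpt n 1) + f (gridpt n i) - f (gridpt n 1) + e i - e 1"
    if "1 \<le> i" "i \<le> n" for i
    using that
  proof (induction i rule: nat_induct_at_least)
    case base
    then show ?case by simp
  next
    case (Suc j)
    then obtain j' where j': "j = Suc j'" by (cases j) auto
    have IH: "ftilde gh n j = gh (gridpt n 1) + f (gridpt n j) - f (gridpt n 1) + e j - e 1"
      using Suc by simp
    have jin: "j \<in> {1..n}" "Suc j \<in> {1..n}" using Suc by auto
    let ?a = "gh (gridpt n j)" and ?b = "gh (gridpt n (Suc j))"
    let ?d = "f (gridpt n (Suc j)) - f (gridpt n j) + e (Suc j) - e j"
    have "\<bar>f (gridpt n (Suc j)) - f (gridpt n j)\<bar> \<le> M * (1 / (real n - 1))"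
      using bspec[OF bspec[OF f_lip grid01[OF jin(2)]] grid01[OF jin(1)]] gstep[of j] by simp
    then have "\<bar>f (gridpt n (Suc j)) - f (gridpt n j)\<bar> \<le> M / (real n - 1)" by simp
    then have dsm: "\<bar>?d\<bar> < 1/2" using e[OF jin(1)] e[OF jin(2)] small by linarith
    have ba: "\<bar>?b - ?a\<bar> < 1" using bspec[OF gh_range grid01[OF jin(1)]] bspec[OF gh_range grid01[OF jin(2)]] by (simp add: abs_less_iff)
    have eq: "?b - ?a = ?d + of_int (k j - k (Suc j))" unfolding e_def by simp
    have u: "unwrap_incr ?a ?b = ?d" by (rule unwrap_eq[OF eq ba dsm])
    have "ftilde gh n (Suc j) = ftilde gh n j + unwrap_incr ?a ?b"
      using j' by simp
    then show ?case using IH u by simp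
  qed
  show ?thesis
  proof (intro exI[of _ "k 1"] ballI)
    fix i assume i: "i \<in> {1..n}"
    have "ftilde gh n i + of_int (k 1) - f (gridpt n i) = e i"
      using main[of i] i unfolding e_def by auto
    then show "\<bar>ftilde gh n i + of_int (k 1) - f (gridpt n i)\<bar> \<le> \<delta>" using e[OF i] by simp
  qed
qed

end
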